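(* Suppose $\mathcal{H}$ and $\mathcal{H}'$ are hereditary graph properties and $\mathcal{H}$ is close to $\mathcal{H}'$. Then $M_{\mathcal{H}}(2\epsilon)\leq M_{\mathcal{H}'}(\epsilon)$ for every $\epsilon\in(0,1/2)$.
   Context: Graphs $G=(V,E)$ with $E\subseteq\binom V2$; $\overline E=\{(x,y)\in V^2:xy\in E\}$. A hereditary graph property is a class of finite graphs closed under isomorphism and induced subgraphs. $d_G(X,Y)=|\overline E\cap(X\times Y)|/(|X||Y|)$. A pair $(X,Y)$ is $\epsilon$-regular if $|d_G(X,Y)-d_G(X',Y')|\le\epsilon$ for all $X'\subseteq X,Y'\subseteq Y$ with $|X'|\ge\epsilon|X|,|Y'|\ge\epsilon|Y|$; a partition $\mathcal P$ of $V$ is $\epsilon$-regular if at least $(1-\epsilon)|V|^2$ pairs of $V^2$ lie in $X\times Y$ for some $\epsilon$-regular $(X,Y)\in\mathcal P^2$. $M_{\mathcal H}(\epsilon)$ is the least $M$ such that all sufficiently large graphs in $\mathcal H$ have an $\epsilon$-regular partition with at most $M$ parts. Graphs $G=(V,E)$, $G'=(V,E')$ on the same vertex set are $\delta$-close if $|\overline E\Delta\overline{E'}|\le\delta|V|^2$. $\mathcal H$ is close to $\mathcal H'$ if for all $\delta>0$ there is $N$ such that every $G\in\mathcal H$ with at least $N$ vertices is $\delta$-close to some $G'\in\mathcal H'$ on the same vertex set. *)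

theory Defs
  imports Main "HOL-Library.Disjoint_Sets" "HOL-Library.Extended_Nat" Complex_Main
begin

text \<open>A finite graph is a pair (V, E) of vertices (natural numbers) and edges
  (two-element subsets of V). Every finite graph is isomorphic to one of this form.\<close>
type_synonym graph = "nat set \<times> nat set set"

definition wf_graph :: "graph \<Rightarrow> bool" where
  "wf_graph G \<longleftrightarrow> finite (fst G) \<and> (\<forall>e\<in>snd G. e \<subseteq> fst G \<and> card e = 2)"

definition Ebar :: "graph \<Rightarrow> (nat \<times> nat) set" where
  "Ebar G = {(x, y). {x, y} \<in> snd G}"

definition density :: "graph \<Rightarrow> nat set \<Rightarrow> nat set \<Rightarrow> real" where
  "density G X Y = real (card (Ebar G \<inter> (X \<times> Y))) / (real (card X) * real (card Y))"

definition regular_pair :: "graph \<Rightarrow> real \<Rightarrow> nat set \<Rightarrow> nat set \<Rightarrow> bool" where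
  "regular_pair G \<epsilon> X Y \<longleftrightarrow>
     (\<forall>X' Y'. X' \<subseteq> X \<longrightarrow> Y' \<subseteq> Y \<longrightarrow> real (card X') \<ge> \<epsilon> * real (card X)
        \<longrightarrow> real (card Y') \<ge> \<epsilon> * real (card Y)
        \<longrightarrow> \<bar>density G X Y - density G X' Y'\<bar> \<le> \<epsilon>)"

definition regular_partition :: "graph \<Rightarrow> real \<Rightarrow> nat set set \<Rightarrow> bool" where
  "regular_partition G \<epsilon> P \<longleftrightarrow> partition_on (fst G) P \<and>
     real (card ((fst G \<times> fst G) \<inter>
        (\<Union>{X \<times> Y | X Y. X \<in> P \<and> Y \<in> P \<and> regular_pair G \<epsilon> X Y})))
       \<ge> (1 - \<epsilon>) * real (card (fst G))^2"

definition induced_subgraph :: "graph \<Rightarrow> nat set \<Rightarrow> graph" where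
  "induced_subgraph G W = (W, {e \<in> snd G. e \<subseteq> W})"

definition graph_iso :: "graph \<Rightarrow> graph \<Rightarrow> bool" where
  "graph_iso G H \<longleftrightarrow> (\<exists>f. bij_betw f (fst G) (fst H) \<and> snd H = (\<lambda>e. f ` e) ` snd G)"

definition hereditary :: "graph set \<Rightarrow> bool" where
  "hereditary \<H> \<longleftrightarrow> (\<forall>G\<in>\<H>. wf_graph G)
     \<and> (\<forall>G H. G \<in> \<H> \<longrightarrow> wf_graph H \<longrightarrow> graph_iso G H \<longrightarrow> H \<in> \<H>)
     \<and> (\<forall>G W. G \<in> \<H> \<longrightarrow> W \<subseteq> fst G \<longrightarrow> induced_subgraph G W \<in> \<H>)"

definition reg_bound :: "graph set \<Rightarrow> real \<Rightarrow> nat \<Rightarrow> bool" where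
  "reg_bound \<H> \<epsilon> M \<longleftrightarrow> (\<exists>N. \<forall>G\<in>\<H>. card (fst G) \<ge> N \<longrightarrow>
      (\<exists>P. regular_partition G \<epsilon> P \<and> card P \<le> M))"

text \<open>M_H(eps): the least such M (infinity if none exists; by Szemeredi's
  regularity lemma it always exists).\<close>
definition M_reg :: "graph set \<Rightarrow> real \<Rightarrow> enat" where
  "M_reg \<H> \<epsilon> = (if \<exists>M. reg_bound \<H> \<epsilon> M then enat (LEAST M. reg_bound \<H> \<epsilon> M) else \<infinity>)"

definition delta_close :: "real \<Rightarrow> graph \<Rightarrow> graph \<Rightarrow> bool" where
  "delta_close \<delta> G G' \<longleftrightarrow> fst G = fst G' \<and>
     real (card ((Ebar G - Ebar G') \<union> (Ebar G' - Ebar G))) \<le> \<delta> * real (card (fst G))^2"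

definition close_to :: "graph set \<Rightarrow> graph set \<Rightarrow> bool" where
  "close_to \<H> \<H>' \<longleftrightarrow> (\<forall>\<delta>>0. \<exists>N. \<forall>G\<in>\<H>. card (fst G) \<ge> N \<longrightarrow>
      (\<exists>G'\<in>\<H>'. delta_close \<delta> G G'))"

end

theory Submission
  imports Defs
begin

lemma density_diff:
  fixes G G' :: graph and A B :: "nat set"
  assumes fA: "finite A" and fB: "finite B"
    and fD: "finite ((Ebar G - Ebar G') \<union> (Ebar G' - Ebar G))"
  shows "\<bar>density G A B - density G' A B\<bar>
     \<le> real (card ((Ebar G - Ebar G') \<union> (Ebar G' - Ebar G))) / (real (card A) * real (card B))"
proof (cases "card A = 0 \<or> card B = 0")
  case True
  then show ?thesis by (auto simp: density_def)
next
  case False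
  define D where "D = (Ebar G - Ebar G') \<union> (Ebar G' - Ebar G)"
  define c1 where "c1 = card (Ebar G \<inter> (A \<times> B))"
  define c2 where "c2 = card (Ebar G' \<inter> (A \<times> B))"
  have fAB: "finite (A \<times> B)" using fA fB by simp
  have "Ebar G \<inter> (A \<times> B) \<subseteq> (Ebar G' \<inter> (A \<times> B)) \<union> (D \<inter> (A \<times> B))"
    unfolding D_def by blast
  then have "c1 \<le> card ((Ebar G' \<inter> (A \<times> B)) \<union> (D \<inter> (A \<times> B)))"
    unfolding c1_def by (intro card_mono) (use fAB in auto)
  also have "\<dots> \<le> c2 + card (D \<inter> (A \<times> B))" unfolding c2_def by (rule card_Un_le)
  finally have 1: "c1 \<le> c2 + card (D \<inter> (A \<times> B))" .
  have "Ebar G' \<inter> (A \<times> B) \<subseteq> (Ebar G \<inter> (A \<times> B)) \<union> (D \<inter> (A \<times> B))"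
    unfolding D_def by blast
  then have "c2 \<le> card ((Ebar G \<inter> (A \<times> B)) \<union> (D \<inter> (A \<times> B)))"
    unfolding c2_def by (intro card_mono) (use fAB in auto)
  also have "\<dots> \<le> c1 + card (D \<inter> (A \<times> B))" unfolding c1_def by (rule card_Un_le)
  finally have 2: "c2 \<le> c1 + card (D \<inter> (A \<times> B))" .
  have 3: "card (D \<inter> (A \<times> B)) \<le> card D" using fD unfolding D_def by (intro card_mono) auto
  have "\<bar>real c1 - real c2\<bar> \<le> real (card D)" using 1 2 3 by (simp add: abs_le_iff; linarith)
  moreover have pos: "real (card A) * real (card B) > 0" using False by simp
  moreover have "density G A B - density G' A B = (real c1 - real c2) / (real (card A) * real (card B))"
    unfolding density_def c1_def c2_def by (rule diff_divide_distrib[symmetric])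
  ultimately show ?thesis unfolding D_def[symmetric]
    by (metis abs_div_pos divide_right_mono less_le)
qed


lemma transfer_pair:
  fixes G G' :: graph and X Y :: "nat set" and \<epsilon> \<eta> n :: real
  defines "D \<equiv> (Ebar G - Ebar G') \<union> (Ebar G' - Ebar G)"
  assumes fX: "finite X" and fY: "finite Y"
    and fD: "finite D"
    and eps: "0 < \<epsilon>" "\<epsilon> < 1/2" and eta: "0 < \<eta>" and npos: "0 < n"
    and cX: "\<eta> * n \<le> real (card X)" and cY: "\<eta> * n \<le> real (card Y)"
    and reg: "regular_pair G' \<epsilon> X Y"
    and cD: "real (card D) \<le> \<epsilon>^3 * \<eta>^2 / 2 * n^2"
  shows "regular_pair G (2*\<epsilon>) X Y"
  unfolding regular_pair_def
proof (intro allI impI)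
  fix X' Y' assume sX: "X' \<subseteq> X" and sY: "Y' \<subseteq> Y"
    and cX': "2 * \<epsilon> * real (card X) \<le> real (card X')"
    and cY': "2 * \<epsilon> * real (card Y) \<le> real (card Y')"
  have fX': "finite X'" using sX fX finite_subset by auto
  have fY': "finite Y'" using sY fY finite_subset by auto
  define m where "m = \<epsilon> * \<eta> * n"
  have mpos: "m > 0" unfolding m_def using eps eta npos by simp
  have a: "m \<le> real (card X')"
  proof -
    have "m \<le> 2 * \<epsilon> * (\<eta> * n)" unfolding m_def using mpos m_def by simp
    also have "\<dots> \<le> 2 * \<epsilon> * real (card X)" using cX eps by simp
    finally show ?thesis using cX' by simp
  qed
  have b: "m \<le> real (card Y')"
  proof -
    have "m \<le> 2 * \<epsilon> * (\<eta> * n)" unfolding m_def using mpos m_def by simp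
    also have "\<dots> \<le> 2 * \<epsilon> * real (card Y)" using cY eps by simp
    finally show ?thesis using cY' by simp
  qed
  have ab: "m * m \<le> real (card X') * real (card Y')"
    using a b mpos by (meson less_le mult_mono of_nat_0_le_iff order_trans)
  have XY: "real (card X') * real (card Y') \<le> real (card X) * real (card Y)"
    using card_mono[OF fX sX] card_mono[OF fY sY] by (simp add: mult_mono)
  have cD': "real (card D) \<le> \<epsilon> / 2 * (m * m)"
    using cD unfolding m_def by (simp add: power2_eq_square power3_eq_cube algebra_simps)
  have mm: "m * m > 0" using mpos by simp
  have e1: "real (card D) / (real (card X') * real (card Y')) \<le> \<epsilon> / 2"
  proof -
    have "real (card X') * real (card Y') > 0" using ab mm by linarith
    moreover have "real (card D) \<le> \<epsilon> / 2 * (real (card X') * real (card Y'))"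
      using cD' mult_left_mono[OF ab, of "\<epsilon>/2"] eps by linarith
    ultimately show ?thesis by (simp add: divide_le_eq)
  qed
  have e2: "real (card D) / (real (card X) * real (card Y)) \<le> \<epsilon> / 2"
  proof -
    have "real (card X) * real (card Y) > 0" using ab mm XY by linarith
    moreover have "real (card D) \<le> \<epsilon> / 2 * (real (card X) * real (card Y))"
      using cD' mult_left_mono[OF order_trans[OF ab XY], of "\<epsilon>/2"] eps by linarith
    ultimately show ?thesis by (simp add: divide_le_eq)
  qed
  have d1: "\<bar>density G X Y - density G' X Y\<bar> \<le> \<epsilon> / 2"
    using density_diff[OF fX fY fD[unfolded D_def], of] e2 unfolding D_def by (meson order_trans)
  have d2: "\<bar>density G X' Y' - density G' X' Y'\<bar> \<le> \<epsilon> / 2"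
    using density_diff[OF fX' fY' fD[unfolded D_def], of] e1 unfolding D_def by (meson order_trans)
  have d3: "\<bar>density G' X Y - density G' X' Y'\<bar> \<le> \<epsilon>"
  proof -
    have "\<epsilon> * real (card X) \<le> real (card X')" using cX' eps by (smt (verit) mult_right_mono of_nat_0_le_iff)
    moreover have "\<epsilon> * real (card Y) \<le> real (card Y')" using cY' eps by (smt (verit) mult_right_mono of_nat_0_le_iff)
    ultimately show ?thesis using reg sX sY unfolding regular_pair_def by blast
  qed
  show "\<bar>density G X Y - density G X' Y'\<bar> \<le> 2 * \<epsilon>"
    using d1 d2 d3 by linarith
qed


lemma count_partition:
  fixes G G' :: graph and P :: "nat set set" and \<epsilon> \<eta> :: real and M :: nat
  assumes fV: "finite (fst G)" and V: "fst G' = fst G"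
    and reg: "regular_partition G' \<epsilon> P" and cP: "card P \<le> M"
    and eta: "0 \<le> \<eta>" and Me: "2 * real M * \<eta> \<le> \<epsilon>"
    and tr: "\<And>X Y. X \<in> P \<Longrightarrow> Y \<in> P \<Longrightarrow> regular_pair G' \<epsilon> X Y
      \<Longrightarrow> \<eta> * real (card (fst G)) \<le> real (card X) \<Longrightarrow> \<eta> * real (card (fst G)) \<le> real (card Y)
      \<Longrightarrow> regular_pair G (2 * \<epsilon>) X Y"
  shows "regular_partition G (2 * \<epsilon>) P"
proof -
  define V where "V = fst G"
  define n where "n = card V"
  have part: "partition_on V P" using reg V unfolding regular_partition_def V_def by simp
  have finV: "finite V" using fV V_def by simp
  have finP: "finite P" using finite_elements[OF finV part] .
  have subV: "\<And>X. X \<in> P \<Longrightarrow> X \<subseteq> V" using part partition_onD1 by blast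
  define S where "S = (V \<times> V) \<inter> \<Union>{X \<times> Y | X Y. X \<in> P \<and> Y \<in> P \<and> regular_pair G' \<epsilon> X Y}"
  define T where "T = (V \<times> V) \<inter> \<Union>{X \<times> Y | X Y. X \<in> P \<and> Y \<in> P \<and> regular_pair G (2*\<epsilon>) X Y}"
  define Sm where "Sm = {X \<in> P. real (card X) < \<eta> * real n}"
  define B where "B = \<Union>Sm"
  have BV: "B \<subseteq> V" unfolding B_def Sm_def using subV by blast
  have sub: "S \<subseteq> T \<union> (B \<times> V) \<union> (V \<times> B)"
  proof
    fix p assume "p \<in> S"
    then obtain x y X Y where p: "p = (x, y)" "x \<in> V" "y \<in> V" "X \<in> P" "Y \<in> P"
      "regular_pair G' \<epsilon> X Y" "x \<in> X" "y \<in> Y" unfolding S_def by blast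
    show "p \<in> T \<union> (B \<times> V) \<union> (V \<times> B)"
    proof (cases "x \<in> B \<or> y \<in> B")
      case True then show ?thesis using p by blast
    next
      case False
      then have "X \<notin> Sm" "Y \<notin> Sm" using p unfolding B_def by blast+
      then have "\<eta> * real n \<le> real (card X)" "\<eta> * real n \<le> real (card Y)"
        using p unfolding Sm_def by auto
      then have "regular_pair G (2 * \<epsilon>) X Y" using tr p unfolding n_def V_def by blast
      then show ?thesis using p unfolding T_def by blast
    qed
  qed
  have finVV: "finite (V \<times> V)" using finV by simp
  have "card S \<le> card (T \<union> (B \<times> V) \<union> (V \<times> B))"
    by (rule card_mono[OF _ sub]) (use finVV BV finV T_def finite_subset in auto)
  also have "\<dots> \<le> card T + card (B \<times> V) + card (V \<times> B)"
    by (metis add_le_mono card_Un_le le_refl order_trans)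
  also have "\<dots> = card T + 2 * (card B * n)" unfolding n_def by (simp add: card_cartesian_product)
  finally have cS: "real (card S) \<le> real (card T) + 2 * (real (card B) * real n)"
    by (metis of_nat_add of_nat_le_iff of_nat_mult of_nat_numeral)
  have cB: "real (card B) \<le> real M * \<eta> * real n"
  proof -
    have finSm: "finite Sm" using finP unfolding Sm_def by simp
    have "card B \<le> sum card Sm" unfolding B_def
      by (rule card_Union_le_sum_card_weak) (use subV finV finite_subset Sm_def in blast)
    then have "real (card B) \<le> (\<Sum>X\<in>Sm. real (card X))" by (metis of_nat_le_iff of_nat_sum)
    also have "\<dots> \<le> real (card Sm) * (\<eta> * real n)"
      by (rule sum_bounded_above) (auto simp: Sm_def)
    also have "\<dots> \<le> real M * (\<eta> * real n)"
    proof (rule mult_right_mono)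
      have "card Sm \<le> card P" using finP unfolding Sm_def by (intro card_mono) auto
      then show "real (card Sm) \<le> real M" using cP by simp
    qed (use eta in simp)
    finally show ?thesis by (simp add: mult.assoc)
  qed
  have "2 * (real (card B) * real n) \<le> 2 * (real M * \<eta> * real n * real n)"
    using mult_right_mono[OF cB, of "real n"] by simp
  also have "\<dots> = (2 * real M * \<eta>) * (real n * real n)" by simp
  also have "\<dots> \<le> \<epsilon> * (real n * real n)" using Me by (intro mult_right_mono) auto
  finally have c2: "2 * (real (card B) * real n) \<le> \<epsilon> * (real n * real n)" .
  have cS2: "(1 - \<epsilon>) * (real n)^2 \<le> real (card S)"
    using reg V unfolding regular_partition_def S_def n_def V_def by simp
  have "(1 - 2 * \<epsilon>) * (real n)^2 \<le> real (card T)"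
    using cS cS2 c2 by (simp add: power2_eq_square algebra_simps)
  then show ?thesis unfolding regular_partition_def
    using part unfolding T_def n_def V_def by simp
qed


lemma Ebar_sub:
  assumes "wf_graph G" shows "Ebar G \<subseteq> fst G \<times> fst G"
  using assms unfolding wf_graph_def Ebar_def by auto

theorem proposition3p6:
  fixes \<H> \<H>' :: "graph set" and \<epsilon> :: real
  assumes "hereditary \<H>" and "hereditary \<H>'" and "close_to \<H> \<H>'"
    and "0 < \<epsilon>" and "\<epsilon> < 1/2"
  shows "M_reg \<H> (2 * \<epsilon>) \<le> M_reg \<H>' \<epsilon>"
proof (cases "\<exists>M. reg_bound \<H>' \<epsilon> M")
  case False
  then have "M_reg \<H>' \<epsilon> = \<infinity>" unfolding M_reg_def by auto
  then show ?thesis by simp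
next
  case True
  define M0 where "M0 = (LEAST M. reg_bound \<H>' \<epsilon> M)"
  have rb: "reg_bound \<H>' \<epsilon> M0" unfolding M0_def using True by (rule LeastI_ex)
  obtain N' where N': "\<And>G. G \<in> \<H>' \<Longrightarrow> card (fst G) \<ge> N' \<Longrightarrow>
      \<exists>P. regular_partition G \<epsilon> P \<and> card P \<le> M0"
    using rb unfolding reg_bound_def by blast
  define \<eta> where "\<eta> = \<epsilon> / (2 * (real M0 + 1))"
  define \<delta> where "\<delta> = \<epsilon>^3 * \<eta>^2 / 2"
  have eta: "\<eta> > 0" unfolding \<eta>_def using assms(4) by simp
  have dpos: "\<delta> > 0" unfolding \<delta>_def using eta assms(4) by simp
  have Me: "2 * real M0 * \<eta> \<le> \<epsilon>"
  proof -
    have "2 * real M0 * \<eta> = \<epsilon> * (real M0 / (real M0 + 1))" unfolding \<eta>_def by (simp add: field_simps)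
    also have "\<dots> \<le> \<epsilon> * 1" using assms(4) by (intro mult_left_mono) auto
    finally show ?thesis by simp
  qed
  obtain N1 where N1: "\<And>G. G \<in> \<H> \<Longrightarrow> card (fst G) \<ge> N1 \<Longrightarrow> \<exists>G'\<in>\<H>'. delta_close \<delta> G G'"
    using assms(3) dpos unfolding close_to_def by blast
  have "reg_bound \<H> (2 * \<epsilon>) M0"
    unfolding reg_bound_def
  proof (intro exI[of _ "max N' (max N1 1)"] ballI impI)
    fix G assume GH: "G \<in> \<H>" and cG: "max N' (max N1 1) \<le> card (fst G)"
    have wfG: "wf_graph G" using GH assms(1) unfolding hereditary_def by blast
    obtain G' where G'H: "G' \<in> \<H>'" and dc: "delta_close \<delta> G G'" using N1[OF GH] cG by auto
    have wfG': "wf_graph G'" using G'H assms(2) unfolding hereditary_def by blast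
    have V: "fst G' = fst G" using dc unfolding delta_close_def by simp
    obtain P where P: "regular_partition G' \<epsilon> P" "card P \<le> M0" using N'[OF G'H] cG V by auto
    have fV: "finite (fst G)" using wfG unfolding wf_graph_def by simp
    define D where "D = (Ebar G - Ebar G') \<union> (Ebar G' - Ebar G)"
    have fD: "finite D" unfolding D_def
      using Ebar_sub[OF wfG] Ebar_sub[OF wfG'] V fV finite_subset[of _ "fst G \<times> fst G"] by auto
    have cD: "real (card D) \<le> \<epsilon>^3 * \<eta>^2 / 2 * (real (card (fst G)))^2"
    proof -
      have "real (card D) \<le> \<delta> * (real (card (fst G)))^2" using dc unfolding delta_close_def D_def by blast
      then show ?thesis unfolding \<delta>_def .
    qed
    have npos: "0 < real (card (fst G))" using cG by simp
    have subV: "\<And>X. X \<in> P \<Longrightarrow> X \<subseteq> fst G"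
      using P(1) V unfolding regular_partition_def by (metis partition_onD1 Union_upper)
    show "\<exists>P. regular_partition G (2 * \<epsilon>) P \<and> card P \<le> M0"
    proof (intro exI conjI)
      show "regular_partition G (2 * \<epsilon>) P"
      proof (rule count_partition[OF fV V P(1) P(2) _ Me])
        show "0 \<le> \<eta>" using eta by simp
        fix X Y assume XY: "X \<in> P" "Y \<in> P" "regular_pair G' \<epsilon> X Y"
          "\<eta> * real (card (fst G)) \<le> real (card X)" "\<eta> * real (card (fst G)) \<le> real (card Y)"
        have fX: "finite X" using subV[OF XY(1)] fV finite_subset by auto
        have fY: "finite Y" using subV[OF XY(2)] fV finite_subset by auto
        show "regular_pair G (2 * \<epsilon>) X Y"
          by (rule transfer_pair[OF fX fY fD[unfolded D_def] assms(4,5) eta npos XY(4,5,3) cD[unfolded D_def]])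
      qed
    qed (rule P(2))
  qed
  then have "(LEAST M. reg_bound \<H> (2 * \<epsilon>) M) \<le> M0" by (rule Least_le)
  then show ?thesis unfolding M_reg_def M0_def using True \<open>reg_bound \<H> (2 * \<epsilon>) M0\<close>
    by auto
qed

end
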